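(* For any probabilistic single-item auction, the maximum expected revenue over all mixed signaling schemes is at least $\mathcal{B}/2$, where $\mathcal{B}=\min_{i'}\sum_{j=1}^m\max_{i\ne i'}\psi_{i,j}$.
   Context: A probabilistic single-item auction: $n\ge 2$ bidders, $m$ item types with probabilities $p_j$, nonnegative valuations $v_{i,j}$; $\psi_{i,j}=p_jv_{i,j}$. After observing the type, the auctioneer broadcasts a signal; bidders bid their conditional expected valuations in a second-price auction. A mixed signaling scheme is a finite signal set $\mathcal{S}$ and $\varphi:[m]\times\mathcal{S}\to[0,1]$ with $\sum_S\varphi(j,S)=1$ for each $j$. Its expected revenue is $\sum_{S\in\mathcal{S}}\mathrm{max2}_i\{\sum_j\psi_{i,j}\varphi(j,S)\}$, where $\mathrm{max2}$ is the second-largest entry of a list (with multiplicity). *)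

theory Defs
  imports Complex_Main
begin

text \<open>Second-largest entry of a list (with multiplicity); lists of length \<ge> 2 expected.\<close>
definition max2 :: "real list \<Rightarrow> real" where
  "max2 xs = sort xs ! (length xs - 2)"

text \<open>Bidders are 0..<n, item types 0..<m. psi i j = p_j * v_{i,j}.\<close>
definition psi :: "(nat \<Rightarrow> real) \<Rightarrow> (nat \<Rightarrow> nat \<Rightarrow> real) \<Rightarrow> nat \<Rightarrow> nat \<Rightarrow> real" where
  "psi p v i j = p j * v i j"

definition mixed_scheme :: "nat \<Rightarrow> 's set \<Rightarrow> (nat \<Rightarrow> 's \<Rightarrow> real) \<Rightarrow> bool" where
  "mixed_scheme m S \<phi> \<longleftrightarrow> finite S \<and>
     (\<forall>j<m. \<forall>s\<in>S. 0 \<le> \<phi> j s \<and> \<phi> j s \<le> 1) \<and>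
     (\<forall>j<m. (\<Sum>s\<in>S. \<phi> j s) = 1)"

definition revenue :: "nat \<Rightarrow> nat \<Rightarrow> (nat \<Rightarrow> real) \<Rightarrow> (nat \<Rightarrow> nat \<Rightarrow> real)
    \<Rightarrow> 's set \<Rightarrow> (nat \<Rightarrow> 's \<Rightarrow> real) \<Rightarrow> real" where
  "revenue n m p v S \<phi> =
     (\<Sum>s\<in>S. max2 (map (\<lambda>i. \<Sum>j<m. psi p v i j * \<phi> j s) [0..<n]))"

definition benchmark :: "nat \<Rightarrow> nat \<Rightarrow> (nat \<Rightarrow> real) \<Rightarrow> (nat \<Rightarrow> nat \<Rightarrow> real) \<Rightarrow> real" where
  "benchmark n m p v =
     Min ((\<lambda>i'. \<Sum>j<m. Max ((\<lambda>i. psi p v i j) ` ({..<n} - {i'}))) ` {..<n})"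

end

theory Submission
  imports Defs "HOL-Library.Multiset" "HOL-Library.Nat_Bijection"
begin

definition ovl :: "real \<Rightarrow> real \<Rightarrow> real \<Rightarrow> real \<Rightarrow> real" where
  "ovl x1 y1 x2 y2 = max 0 (min y1 y2 - max x1 x2)"

lemma ovl_nonneg: "ovl a b c d \<ge> 0"
  by (simp add: ovl_def)

lemma ovl_sym: "ovl a b c d = ovl c d a b"
  by (simp add: ovl_def min.commute max.commute)

lemma ovl_split: "x \<le> y \<Longrightarrow> y \<le> z \<Longrightarrow> ovl a b x y + ovl a b y z = ovl a b x z"
  by (auto simp: ovl_def max_def min_def)

lemma ovl_telescope:
  assumes "\<And>k. D k \<le> D (Suc k)"
  shows "(\<Sum>b<k. ovl a c (D b) (D (Suc b))) = ovl a c (D 0) (D k)"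
proof (induction k)
  case 0
  then show ?case by (simp add: ovl_def)
next
  case (Suc k)
  have "D 0 \<le> D k" using lift_Suc_mono_le[of D 0 k] assms by auto
  then show ?case using Suc ovl_split[of "D 0" "D k" "D (Suc k)" a c] assms by simp
qed

lemma ovl_F1:
  assumes "0 \<le> x" "x \<le> y" "y \<le> W" "H = W/2"
  shows "ovl x y (0 - H) (W - H) + ovl (x - H) (y - H) 0 W = y - x"
  using assms by (auto simp: ovl_def max_def min_def)

lemma ovl_F2:
  assumes "0 \<le> W" "H = W/2"
  shows "ovl (0 - H) (W - H) 0 W = H"
  using assms by (auto simp: ovl_def max_def min_def)

lemma ovl_F3:
  assumes "0 \<le> H" "x \<le> y"
  shows "ovl x y (x - H) (y - H) = max 0 (y - x - H)"
  using assms by (auto simp: ovl_def max_def min_def)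

lemma max2_ge:
  assumes "i < length xs" "k < length xs" "i \<noteq> k" "xs!i \<ge> c" "xs!k \<ge> c"
  shows "max2 xs \<ge> c"
proof (rule ccontr)
  assume neg: "\<not> c \<le> max2 xs"
  define L where "L = length xs"
  define ys where "ys = sort xs"
  have lys: "length ys = L" by (simp add: ys_def L_def)
  have L2: "L \<ge> 2" using assms unfolding L_def by linarith
  have "{i, k} \<subseteq> {j. j < length xs \<and> c \<le> xs!j}" using assms by auto
  hence "card {i, k} \<le> card {j. j < length xs \<and> c \<le> xs!j}"
    by (intro card_mono) auto
  hence c2: "length (filter (\<lambda>x. c \<le> x) xs) \<ge> 2"
    using assms(3) by (simp add: length_filter_conv_card)
  have eq: "length (filter (\<lambda>x. c \<le> x) ys) = length (filter (\<lambda>x. c \<le> x) xs)"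
    by (metis mset_filter mset_sort size_mset ys_def)
  have lt: "ys ! (L - 2) < c" using neg by (simp add: max2_def ys_def L_def)
  have sub: "{j. j < length ys \<and> c \<le> ys!j} \<subseteq> {L - 1}"
  proof
    fix j assume j: "j \<in> {j. j < length ys \<and> c \<le> ys!j}"
    show "j \<in> {L - 1}"
    proof (rule ccontr)
      assume "j \<notin> {L - 1}"
      hence "j \<le> L - 2" using j lys by auto
      hence "ys ! j \<le> ys ! (L - 2)"
        using sorted_nth_mono[of ys j "L - 2"] L2 lys by (simp add: ys_def)
      thus False using j lt by auto
    qed
  qed
  have "card {j. j < length ys \<and> c \<le> ys!j} \<le> 1"
    using card_mono[OF _ sub] by simp
  thus False using c2 eq by (simp add: length_filter_conv_card)
qed

theorem theorem2:
  fixes n m :: nat and p :: "nat \<Rightarrow> real" and v :: "nat \<Rightarrow> nat \<Rightarrow> real"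
  assumes "n \<ge> 2"
    and "\<forall>j<m. p j \<ge> 0" and "(\<Sum>j<m. p j) = 1"
    and "\<forall>i<n. \<forall>j<m. v i j \<ge> 0"
  shows "\<exists>(S :: nat set) \<phi>. mixed_scheme m S \<phi> \<and>
           revenue n m p v S \<phi> \<ge> benchmark n m p v / 2"
proof -
  define \<psi> where "\<psi> = psi p v"
  have psinn: "\<And>i j. i < n \<Longrightarrow> j < m \<Longrightarrow> \<psi> i j \<ge> 0"
    using assms(2,4) by (simp add: \<psi>_def psi_def)
  define t where "t j = Max ((\<lambda>i. \<psi> i j) ` {..<n})" for j
  define h where "h j = (SOME i. i < n \<and> \<psi> i j = t j)" for j
  have tge: "\<And>i j. i < n \<Longrightarrow> \<psi> i j \<le> t j"
    unfolding t_def by (rule Max_ge) auto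
  have hprop: "h j < n \<and> \<psi> (h j) j = t j" for j
  proof -
    have "t j \<in> (\<lambda>i. \<psi> i j) ` {..<n}" unfolding t_def
      using assms(1) by (intro Max_in) (auto simp: lessThan_empty_iff)
    then obtain i where "i < n" "\<psi> i j = t j" by auto
    thus ?thesis unfolding h_def by (metis (mono_tags, lifting) someI_ex)
  qed
  have tnn: "\<And>j. j < m \<Longrightarrow> t j \<ge> 0"
    using hprop psinn by metis
  define T where "T a = (\<Sum>j<m. if h j = a then t j else 0)" for a
  define W where "W = (\<Sum>j<m. t j)"
  define C where "C k = (\<Sum>b<k. T b)" for k
  define H where "H = W/2"
  define z where "z a b = ovl (C a) (C (Suc a)) (C b - H) (C (Suc b) - H)" for a b
  have Tnn: "T a \<ge> 0" for a unfolding T_def using tnn by (intro sum_nonneg) auto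
  have Wn: "W = C n"
  proof -
    have "C n = (\<Sum>j<m. \<Sum>b<n. if h j = b then t j else 0)"
      unfolding C_def T_def by (rule sum.swap)
    also have "\<dots> = W" unfolding W_def using hprop by (simp add: sum.delta)
    finally show ?thesis by simp
  qed
  have Cmono: "C k \<le> C (Suc k)" for k by (simp add: C_def Tnn)
  have CSuc: "C (Suc a) = C a + T a" for a by (simp add: C_def)
  have C0: "C 0 = 0" by (simp add: C_def)
  have Cnn: "C k \<ge> 0" for k unfolding C_def using Tnn by (simp add: sum_nonneg)
  have Cle: "k \<le> n \<Longrightarrow> C k \<le> W" for k
    unfolding Wn C_def using Tnn by (intro sum_mono2) auto
  have Wnn: "W \<ge> 0" using Cnn Wn by simp
  have znn: "z a b \<ge> 0" for a b by (simp add: z_def ovl_nonneg)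
  have F1: "(\<Sum>b<n. z a b) + (\<Sum>b<n. z b a) = T a" if "a < n" for a
  proof -
    have "(\<Sum>b<n. z a b) = ovl (C a) (C (Suc a)) (C 0 - H) (C n - H)"
      unfolding z_def by (rule ovl_telescope[where D="\<lambda>b. C b - H"]) (simp add: Cmono)
    moreover have "(\<Sum>b<n. z b a) = (\<Sum>b<n. ovl (C a - H) (C (Suc a) - H) (C b) (C (Suc b)))"
      unfolding z_def by (simp add: ovl_sym)
    moreover have "\<dots> = ovl (C a - H) (C (Suc a) - H) (C 0) (C n)"
      by (rule ovl_telescope) (simp add: Cmono)
    moreover have "ovl (C a) (C (Suc a)) (0 - H) (W - H) + ovl (C a - H) (C (Suc a) - H) 0 W = C (Suc a) - C a"
      using Cnn Cmono Cle that by (intro ovl_F1) (auto simp: H_def)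
    ultimately show ?thesis using C0 Wn CSuc by simp
  qed
  have F2: "(\<Sum>a<n. \<Sum>b<n. z a b) = H"
  proof -
    have "(\<Sum>a<n. \<Sum>b<n. z a b) = (\<Sum>a<n. ovl (0 - H) (W - H) (C a) (C (Suc a)))"
      unfolding z_def
      by (intro sum.cong refl, subst ovl_telescope[where D="\<lambda>b. C b - H"]) (auto simp: Cmono C0 Wn ovl_sym)
    also have "\<dots> = ovl (0 - H) (W - H) (C 0) (C n)"
      by (rule ovl_telescope) (simp add: Cmono)
    also have "\<dots> = H" using ovl_F2[OF Wnn H_def] C0 Wn[symmetric] by simp
    finally show ?thesis .
  qed
  have F3: "z a a = max 0 (T a - H)" for a
    unfolding z_def using Cmono CSuc Wnn by (subst ovl_F3) (auto simp: H_def)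
  have zleT: "z a b \<le> T a" if "a < n" "b < n" for a b
  proof -
    have "z a b \<le> (\<Sum>b<n. z a b)" using that znn by (intro member_le_sum) auto
    moreover have "(\<Sum>b<n. z b a) \<ge> 0" using znn by (simp add: sum_nonneg)
    ultimately show ?thesis using F1[OF that(1)] by linarith
  qed
  define PR where "PR j a b = (if T (h j) = 0 then 0 else
      ((if h j = a then 1 else 0) + (if h j = b then 1 else 0)) * z a b / T (h j))" for j a b
  define lam where "lam j = (if T (h j) = 0 then 1 else PR j (h j) (h j))" for j
  define \<phi> where "\<phi> j s = (if even s then (case prod_decode (s div 2) of (a,b) \<Rightarrow>
      if a = b then 0 else PR j a b) else (if s div 2 = j then lam j else 0))" for j s
  define S1 where "S1 = (\<lambda>(a,b). 2 * prod_encode (a,b)) ` ({..<n} \<times> {..<n})"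
  define S2 where "S2 = (\<lambda>k. 2*k+1) ` {..<m}"
  define S where "S = S1 \<union> S2"
  have PRnn: "PR j a b \<ge> 0" for j a b unfolding PR_def using Tnn znn by simp
  have lamnn: "lam j \<ge> 0" for j unfolding lam_def using PRnn by simp
  have \<phi>nn: "\<phi> j s \<ge> 0" for j s unfolding \<phi>_def using PRnn lamnn
    by (auto split: prod.split)
  have \<phi>pair: "\<phi> j (2 * prod_encode (a,b)) = (if a = b then 0 else PR j a b)" for j a b
    by (simp add: \<phi>_def)
  have \<phi>self: "\<phi> j (2*k+1) = (if k = j then lam j else 0)" for j k
    by (simp add: \<phi>_def)
  have fin: "finite S" by (simp add: S_def S1_def S2_def)
  have disj: "S1 \<inter> S2 = {}" unfolding S1_def S2_def by auto presburger
  have inj1: "inj_on (\<lambda>(a,b). 2 * prod_encode (a,b)) ({..<n} \<times> {..<n})"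
    by (auto simp: inj_on_def)
  have inj2: "inj_on (\<lambda>k::nat. 2*k+1) {..<m}" by (auto simp: inj_on_def)
  have sumS: "(\<Sum>s\<in>S. g s) = (\<Sum>a<n. \<Sum>b<n. g (2 * prod_encode (a,b))) + (\<Sum>k<m. g (2*k+1))"
    for g :: "nat \<Rightarrow> real"
  proof -
    have "(\<Sum>s\<in>S. g s) = (\<Sum>s\<in>S1. g s) + (\<Sum>s\<in>S2. g s)"
      unfolding S_def using disj by (intro sum.union_disjoint) (auto simp: S1_def S2_def)
    moreover have "(\<Sum>s\<in>S1. g s) = (\<Sum>(a,b)\<in>{..<n} \<times> {..<n}. g (2 * prod_encode (a,b)))"
      unfolding S1_def using inj1 by (subst sum.reindex) (auto simp: case_prod_beta comp_def)
    moreover have "\<dots> = (\<Sum>a<n. \<Sum>b<n. g (2 * prod_encode (a,b)))"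
      by (simp add: sum.cartesian_product)
    moreover have "(\<Sum>s\<in>S2. g s) = (\<Sum>k<m. g (2*k+1))"
      unfolding S2_def using inj2 by (subst sum.reindex) auto
    ultimately show ?thesis by simp
  qed
  have sum1: "(\<Sum>s\<in>S. \<phi> j s) = 1" if "j < m" for j
  proof -
    have "(\<Sum>k<m. \<phi> j (2*k+1)) = (\<Sum>k<m. if k = j then lam j else 0)"
      by (intro sum.cong refl) (rule \<phi>self)
    hence A: "(\<Sum>k<m. \<phi> j (2*k+1)) = lam j" using that by simp
    have B: "(\<Sum>a<n. \<Sum>b<n. \<phi> j (2 * prod_encode (a,b))) + lam j = 1"
    proof (cases "T (h j) = 0")
      case True
      hence z0: "PR j a b = 0" for a b by (simp add: PR_def)
      have "(\<Sum>a<n. \<Sum>b<n. \<phi> j (2 * prod_encode (a,b))) = 0"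
        by (intro sum.neutral ballI) (simp add: \<phi>pair z0)
      then show ?thesis using True by (simp add: lam_def)
    next
      case False
      define g where "g = h j"
      have gn: "g < n" using hprop g_def by simp
      have split: "(\<Sum>a<n. \<Sum>b<n. \<phi> j (2 * prod_encode (a,b))) =
          (\<Sum>a<n. \<Sum>b<n. PR j a b) - (\<Sum>a<n. PR j a a)"
      proof -
        have "(\<Sum>a<n. \<Sum>b<n. PR j a b) = (\<Sum>a<n. \<Sum>b<n. \<phi> j (2 * prod_encode (a,b)) + (if a = b then PR j a b else 0))"
          by (intro sum.cong refl) (simp add: \<phi>pair)
        also have "\<dots> = (\<Sum>a<n. \<Sum>b<n. \<phi> j (2 * prod_encode (a,b))) + (\<Sum>a<n. PR j a a)"
          by (simp add: sum.distrib)
        finally show ?thesis by simp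
      qed
      have diag: "(\<Sum>a<n. PR j a a) = PR j g g"
      proof -
        have "(\<Sum>a<n. PR j a a) = (\<Sum>a<n. if a = g then PR j g g else 0)"
          by (intro sum.cong refl) (auto simp: PR_def g_def)
        thus ?thesis using gn by simp
      qed
      have full: "(\<Sum>a<n. \<Sum>b<n. PR j a b) = 1"
      proof -
        have "(\<Sum>a<n. \<Sum>b<n. PR j a b) = (\<Sum>a<n. \<Sum>b<n. ((if g = a then z a b else 0) + (if g = b then z a b else 0)) / T g)"
          using False by (intro sum.cong refl) (simp add: PR_def g_def[symmetric] add_divide_distrib)
        also have "\<dots> = ((\<Sum>a<n. \<Sum>b<n. (if g = a then z a b else 0)) + (\<Sum>a<n. \<Sum>b<n. (if g = b then z a b else 0))) / T g"
          by (simp add: sum_divide_distrib[symmetric] sum.distrib)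
        also have "\<dots> = ((\<Sum>b<n. z g b) + (\<Sum>a<n. z a g)) / T g"
          using gn by (simp add: sum.delta sum.swap[of "\<lambda>a b. if g = a then z a b else 0"])
        also have "\<dots> = 1" using F1[OF gn] False g_def by simp
        finally show ?thesis .
      qed
      show ?thesis using split diag full False by (simp add: lam_def g_def)
    qed
    show ?thesis using A B sumS[of "\<phi> j"] by simp
  qed
  have scheme: "mixed_scheme m S \<phi>"
    unfolding mixed_scheme_def
  proof (intro conjI allI impI ballI)
    show "finite S" by (rule fin)
    fix j s assume j: "j < m" and s: "s \<in> S"
    show "0 \<le> \<phi> j s" by (rule \<phi>nn)
    show "\<phi> j s \<le> 1" using sum1[OF j] member_le_sum[of s S "\<phi> j"] s \<phi>nn fin by simp
  next
    fix j assume "j < m" thus "(\<Sum>s\<in>S. \<phi> j s) = 1" by (rule sum1)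
  qed
  define Lst where "Lst s = map (\<lambda>i. \<Sum>j<m. \<psi> i j * \<phi> j s) [0..<n]" for s
  have Lnth: "i < n \<Longrightarrow> Lst s ! i = (\<Sum>j<m. \<psi> i j * \<phi> j s)" for i s
    by (simp add: Lst_def)
  have Llen: "length (Lst s) = n" for s by (simp add: Lst_def)
  have valnn: "i < n \<Longrightarrow> (\<Sum>j<m. \<psi> i j * \<phi> j s) \<ge> 0" for i s
    using psinn \<phi>nn by (intro sum_nonneg) auto
  have max2nn: "max2 (Lst s) \<ge> 0" for s
    using assms(1) by (intro max2_ge[of 0 _ 1]) (auto simp: Llen Lnth valnn)
  have pairb: "max2 (Lst (2 * prod_encode (a,b))) \<ge> (if a = b then 0 else z a b)"
    if ab: "a < n" "b < n" for a b
  proof (cases "a = b")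
    case True then show ?thesis using max2nn by simp
  next
    case False
    have ent: "Lst (2 * prod_encode (a,b)) ! c \<ge> z a b" if c: "c = a \<or> c = b" for c
    proof -
      have cn: "c < n" using c ab by auto
      have "(\<Sum>j<m. (if h j = c then t j * (z a b / T c) else 0)) \<le> (\<Sum>j<m. \<psi> c j * \<phi> j (2 * prod_encode (a,b)))"
      proof (rule sum_mono)
        fix j assume j: "j \<in> {..<m}"
        show "(if h j = c then t j * (z a b / T c) else 0) \<le> \<psi> c j * \<phi> j (2 * prod_encode (a,b))"
        proof (cases "h j = c")
          case True
          have "\<phi> j (2 * prod_encode (a,b)) = z a b / T c"
            using True False c by (auto simp: \<phi>pair PR_def)
          then show ?thesis using True hprop[of j] by simp
        next
          case False2: False
          then show ?thesis using psinn[OF cn] j \<phi>nn by (simp add: mult_nonneg_nonneg)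
        qed
      qed
      moreover have "(\<Sum>j<m. (if h j = c then t j * K else 0)) = T c * K" for K
        unfolding T_def by (auto simp: sum_distrib_right intro!: sum.cong)
      moreover have "T c * (z a b / T c) = z a b"
      proof (cases "T c = 0")
        case True
        have "z a b = 0"
        proof (cases "c = a")
          case True2: True
          then show ?thesis using zleT[OF ab] znn[of a b] True by simp
        next
          case False2: False
          hence "c = b" using c by simp
          have "z a b \<le> (\<Sum>a<n. z a b)" using ab znn by (intro member_le_sum) auto
          moreover have "(\<Sum>b'<n. z b b') \<ge> 0" using znn by (simp add: sum_nonneg)
          ultimately have "z a b \<le> T b" using F1[OF ab(2)] by linarith
          then show ?thesis using znn[of a b] True \<open>c = b\<close> by simp
        qed
        then show ?thesis by simp
      qed simp
      ultimately show ?thesis using Lnth[OF cn] by simp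
    qed
    show ?thesis using max2_ge[of a "Lst (2 * prod_encode (a,b))" b "z a b"] ent False ab
      by (simp add: Llen)
  qed
  define M where "M k = Max ((\<lambda>i. \<psi> i k) ` ({..<n} - {h k}))" for k
  have Mprop: "\<exists>i<n. i \<noteq> h k \<and> \<psi> i k = M k" for k
  proof -
    have ne: "{..<n} - {h k} \<noteq> {}"
    proof
      assume "{..<n} - {h k} = {}"
      hence "{0,1} \<subseteq> {h k}" using assms(1) by (auto simp: subset_iff)
      thus False by auto
    qed
    have "M k \<in> (\<lambda>i. \<psi> i k) ` ({..<n} - {h k})" unfolding M_def using ne by (intro Max_in) auto
    thus ?thesis by auto
  qed
  have Mle: "M k \<le> t k" for k using Mprop[of k] tge by metis
  have Mnn: "k < m \<Longrightarrow> M k \<ge> 0" for k using Mprop[of k] psinn by metis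
  have selfb: "max2 (Lst (2*k+1)) \<ge> lam k * M k" if k: "k < m" for k
  proof -
    have ent: "Lst (2*k+1) ! i = \<psi> i k * lam k" if "i < n" for i
    proof -
      have "Lst (2*k+1) ! i = (\<Sum>j<m. \<psi> i j * \<phi> j (2*k+1))" by (rule Lnth[OF that])
      also have "\<dots> = (\<Sum>j<m. if j = k then \<psi> i k * lam k else 0)"
        by (intro sum.cong refl) (subst \<phi>self, auto)
      finally have "Lst (2*k+1) ! i = (\<Sum>j<m. if j = k then \<psi> i k * lam k else 0)" .
      thus ?thesis using k by simp
    qed
    obtain i where i: "i < n" "i \<noteq> h k" "\<psi> i k = M k" using Mprop by blast
    have e1: "Lst (2*k+1) ! h k = \<psi> (h k) k * lam k" using ent hprop by blast
    have "lam k * M k \<le> \<psi> (h k) k * lam k" using hprop[of k] Mle[of k] lamnn[of k]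
      by (simp add: mult_left_mono mult.commute[of _ "lam k"])
    hence "lam k * M k \<le> Lst (2*k+1) ! h k" using e1 by linarith
    moreover have "lam k * M k \<le> Lst (2*k+1) ! i" using ent[OF i(1)] i by simp
    ultimately show ?thesis using max2_ge[of "h k" "Lst (2*k+1)" i] hprop[of k] i by (simp add: Llen)
  qed
  have rev: "revenue n m p v S \<phi> \<ge> (\<Sum>a<n. \<Sum>b<n. if a = b then 0 else z a b) + (\<Sum>k<m. lam k * M k)"
  proof -
    have "revenue n m p v S \<phi> = (\<Sum>s\<in>S. max2 (Lst s))"
      unfolding revenue_def Lst_def \<psi>_def by simp
    also have "\<dots> = (\<Sum>a<n. \<Sum>b<n. max2 (Lst (2 * prod_encode (a,b)))) + (\<Sum>k<m. max2 (Lst (2*k+1)))"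
      by (rule sumS)
    moreover have "(\<Sum>a<n. \<Sum>b<n. if a = b then 0 else z a b) \<le> (\<Sum>a<n. \<Sum>b<n. max2 (Lst (2 * prod_encode (a,b))))"
      using pairb by (intro sum_mono) auto
    moreover have "(\<Sum>k<m. lam k * M k) \<le> (\<Sum>k<m. max2 (Lst (2*k+1)))"
      using selfb by (intro sum_mono) auto
    ultimately show ?thesis by linarith
  qed
  define f where "f i' = (\<Sum>j<m. Max ((\<lambda>i. \<psi> i j) ` ({..<n} - {i'})))" for i'
  have Bdef: "benchmark n m p v = Min (f ` {..<n})"
    unfolding benchmark_def f_def \<psi>_def by simp
  have Ble: "a < n \<Longrightarrow> benchmark n m p v \<le> f a" for a
    unfolding Bdef by (rule Min_le) auto
  have Pdiag: "(\<Sum>a<n. \<Sum>b<n. if a = b then 0 else z a b) = H - (\<Sum>a<n. z a a)"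
  proof -
    have "(\<Sum>a<n. \<Sum>b<n. z a b) = (\<Sum>a<n. \<Sum>b<n. (if a = b then 0 else z a b) + (if a = b then z a b else 0))"
      by (intro sum.cong refl) simp
    also have "\<dots> = (\<Sum>a<n. \<Sum>b<n. if a = b then 0 else z a b) + (\<Sum>a<n. z a a)"
      by (simp add: sum.distrib)
    finally show ?thesis using F2 by simp
  qed
  have Maxle: "Max ((\<lambda>i. \<psi> i j) ` ({..<n} - {a})) \<le> t j" for a j
  proof -
    have ne: "{..<n} - {a} \<noteq> {}"
    proof
      assume "{..<n} - {a} = {}"
      hence "{0,1} \<subseteq> {a}" using assms(1) by (auto simp: subset_iff)
      thus False by auto
    qed
    show ?thesis using ne tge by (subst Max_le_iff) auto
  qed
  have lamMnn: "(\<Sum>k<m. lam k * M k) \<ge> 0" using lamnn Mnn by (intro sum_nonneg) auto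
  show ?thesis
  proof (intro exI conjI)
    show "mixed_scheme m S \<phi>" by (rule scheme)
    show "benchmark n m p v / 2 \<le> revenue n m p v S \<phi>"
    proof (cases "\<forall>a<n. T a \<le> H")
      case True
      have "(\<Sum>a<n. z a a) = 0" using True F3 by (intro sum.neutral) auto
      hence P: "(\<Sum>a<n. \<Sum>b<n. if a = b then 0 else z a b) = H" using Pdiag by simp
      have "f 0 \<le> W" unfolding f_def W_def using Maxle by (intro sum_mono) auto
      hence "benchmark n m p v \<le> W" using Ble[of 0] assms(1) by simp
      thus ?thesis using rev P lamMnn H_def by linarith
    next
      case False
      then obtain a where a: "a < n" "T a > H" by auto
      have others: "T b \<le> W - T a" if "b < n" "b \<noteq> a" for b
      proof -
        have "(\<Sum>x\<in>{a,b}. T x) \<le> (\<Sum>x<n. T x)" using a that Tnn by (intro sum_mono2) auto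
        thus ?thesis using that Wn by (simp add: C_def)
      qed
      have TaW: "T a \<le> W" using Cle[of "Suc a"] a CSuc Cnn[of a] by simp
      have "(\<Sum>b<n. z b b) = (\<Sum>b<n. if b = a then T a - H else 0)"
      proof (intro sum.cong refl)
        fix b assume b: "b \<in> {..<n}"
        show "z b b = (if b = a then T a - H else 0)"
        proof (cases "b = a")
          case True then show ?thesis using F3 a by simp
        next
          case False
          then show ?thesis using F3[of b] others[of b] b a H_def by auto
        qed
      qed
      hence P: "(\<Sum>a<n. \<Sum>b<n. if a = b then 0 else z a b) = W - T a"
        using Pdiag a H_def by simp
      define Sa where "Sa = (\<Sum>k<m. if h k = a then M k else 0)"
      have Tpos: "T a > 0" using a H_def Wnn by linarith
      have lamS: "(\<Sum>k<m. lam k * M k) \<ge> (2 * (T a - H) / T a) * Sa"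
      proof -
        have "(\<Sum>k<m. lam k * M k) \<ge> (\<Sum>k<m. if h k = a then (2 * (T a - H) / T a) * M k else 0)"
        proof (rule sum_mono)
          fix k assume k: "k \<in> {..<m}"
          show "(if h k = a then (2 * (T a - H) / T a) * M k else 0) \<le> lam k * M k"
          proof (cases "h k = a")
            case True
            have "lam k = 2 * z a a / T a" using True Tpos by (simp add: lam_def PR_def)
            then show ?thesis using True F3[of a] a by simp
          next
            case False
            then show ?thesis using lamnn[of k] Mnn[of k] k by simp
          qed
        qed
        also have "(\<Sum>k<m. if h k = a then (2 * (T a - H) / T a) * M k else 0) = (2 * (T a - H) / T a) * Sa"
          unfolding Sa_def by (auto simp: sum_distrib_left intro!: sum.cong)
        finally show ?thesis .
      qed
      have fa: "f a \<le> Sa + (W - T a)"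
      proof -
        have "W - T a = (\<Sum>j<m. if h j = a then 0 else t j)"
          unfolding W_def T_def by (simp add: sum_subtractf[symmetric]) (intro sum.cong refl, auto)
        hence "Sa + (W - T a) = (\<Sum>j<m. (if h j = a then M j else 0) + (if h j = a then 0 else t j))"
          unfolding Sa_def by (simp add: sum.distrib)
        moreover have "f a \<le> (\<Sum>j<m. (if h j = a then M j else 0) + (if h j = a then 0 else t j))"
          unfolding f_def
        proof (rule sum_mono)
          fix j assume "j \<in> {..<m}"
          show "Max ((\<lambda>i. \<psi> i j) ` ({..<n} - {a})) \<le> (if h j = a then M j else 0) + (if h j = a then 0 else t j)"
            using Maxle[of j a] by (cases "h j = a") (auto simp: M_def)
        qed
        ultimately show ?thesis by simp
      qed
      have SaT: "Sa \<le> T a" unfolding Sa_def T_def using Mle by (intro sum_mono) auto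
      have Sann: "Sa \<ge> 0" unfolding Sa_def using Mnn by (intro sum_nonneg) auto
      define R where "R = W - T a"
      have Rnn: "R \<ge> 0" using TaW R_def by simp
      have RT: "R \<le> T a" using a R_def H_def by simp
      have coef: "2 * (T a - H) / T a * Sa = Sa - R * Sa / T a"
        using Tpos R_def H_def by (simp add: field_simps) (simp add: R_def algebra_simps)
      have i1: "R * Sa / T a \<le> Sa" using Tpos RT Sann by (simp add: pos_divide_le_eq mult_right_mono mult.commute[of Sa])
      have i2: "R * Sa / T a \<le> R" using Tpos SaT Rnn by (simp add: pos_divide_le_eq mult_left_mono mult.commute[of Sa])
      have "benchmark n m p v \<le> Sa + R" using Ble[OF a(1)] fa R_def by simp
      moreover have "(\<Sum>k<m. lam k * M k) \<ge> Sa - R * Sa / T a" using lamS coef by simp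
      ultimately have q: "benchmark n m p v \<le> Sa + R" "revenue n m p v S \<phi> \<ge> R + Sa - R * Sa / T a"
        using rev P R_def by linarith+
      show ?thesis using q i1 i2 by linarith
    qed
  qed
qed

end
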